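(* Let $G$ be a Nash equilibrium graph of the sum network creation game with $n$ players and let $H\subseteq G$ be a non-trivial $2$-edge-connected component of $G$. Then $|D(u)-D(v)|\le 3n$ for all $u,v\in V(H)$.
   Context: Sum network creation game: players $V=\{1,\dots,n\}$, parameter $\alpha>0$; a strategy of $u$ is $s_u\subseteq V\setminus\{u\}$; the graph $G_s$ has vertex set $V$ and an edge $uv$ whenever $v\in s_u$ or $u\in s_v$; the cost of $u$ is $c_u(s)=\alpha|s_u|+\sum_{v\neq u}d_{G_s}(u,v)$. A Nash equilibrium is a strategy vector from which no player can strictly decrease his cost by changing only his own strategy; a Nash equilibrium graph is $G=G_s$ for such $s$. For a vertex $u$, $D(u)=\sum_{v\ne u} d_G(u,v)$. A $2$-edge-connected component of $G$ is a maximal subgraph of $G$ with no bridges; it is non-trivial if it has at least $3$ vertices. *)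

theory Defs
  imports Complex_Main "HOL-Library.Extended_Real"
begin

definition players :: "nat \<Rightarrow> nat set" where
  "players n = {1..n}"

definition valid_profile :: "nat \<Rightarrow> (nat \<Rightarrow> nat set) \<Rightarrow> bool" where
  "valid_profile n s \<longleftrightarrow> (\<forall>u\<in>players n. s u \<subseteq> players n - {u})"

definition adj :: "nat \<Rightarrow> (nat \<Rightarrow> nat set) \<Rightarrow> nat \<Rightarrow> nat \<Rightarrow> bool" where
  "adj n s u v \<longleftrightarrow> u \<in> players n \<and> v \<in> players n \<and> u \<noteq> v \<and> (v \<in> s u \<or> u \<in> s v)"

definition adj_rel :: "nat \<Rightarrow> (nat \<Rightarrow> nat set) \<Rightarrow> (nat \<times> nat) set" where
  "adj_rel n s = {(u, v). adj n s u v}"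

definition edges :: "nat \<Rightarrow> (nat \<Rightarrow> nat set) \<Rightarrow> nat set set" where
  "edges n s = {{u, v} | u v. adj n s u v}"

definition gdist :: "nat \<Rightarrow> (nat \<Rightarrow> nat set) \<Rightarrow> nat \<Rightarrow> nat \<Rightarrow> enat" where
  "gdist n s u v =
     (if \<exists>k. (u, v) \<in> adj_rel n s ^^ k then enat (LEAST k. (u, v) \<in> adj_rel n s ^^ k) else \<infinity>)"

definition Dsum :: "nat \<Rightarrow> (nat \<Rightarrow> nat set) \<Rightarrow> nat \<Rightarrow> ereal" where
  "Dsum n s u = (\<Sum>v\<in>players n - {u}. ereal_of_enat (gdist n s u v))"

definition cost :: "real \<Rightarrow> nat \<Rightarrow> (nat \<Rightarrow> nat set) \<Rightarrow> nat \<Rightarrow> ereal" where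
  "cost \<alpha> n s u = ereal (\<alpha> * real (card (s u))) + Dsum n s u"

definition nash_eq :: "real \<Rightarrow> nat \<Rightarrow> (nat \<Rightarrow> nat set) \<Rightarrow> bool" where
  "nash_eq \<alpha> n s \<longleftrightarrow> valid_profile n s \<and>
     (\<forall>u\<in>players n. \<forall>t. t \<subseteq> players n - {u} \<longrightarrow> \<not> cost \<alpha> n (s(u := t)) u < cost \<alpha> n s u)"

definition subgraph :: "nat \<Rightarrow> (nat \<Rightarrow> nat set) \<Rightarrow> nat set \<Rightarrow> nat set set \<Rightarrow> bool" where
  "subgraph n s W F \<longleftrightarrow> W \<subseteq> players n \<and> F \<subseteq> edges n s \<and> (\<forall>e\<in>F. e \<subseteq> W)"

definition sg_connected :: "nat set \<Rightarrow> nat set set \<Rightarrow> bool" where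
  "sg_connected W F \<longleftrightarrow> (\<forall>x\<in>W. \<forall>y\<in>W. (x, y) \<in> {(a, b). {a, b} \<in> F}\<^sup>*)"

definition bridgeless :: "nat set \<Rightarrow> nat set set \<Rightarrow> bool" where
  "bridgeless W F \<longleftrightarrow> (\<forall>e\<in>F. sg_connected W (F - {e}))"

definition two_ec :: "nat \<Rightarrow> (nat \<Rightarrow> nat set) \<Rightarrow> nat set \<Rightarrow> nat set set \<Rightarrow> bool" where
  "two_ec n s W F \<longleftrightarrow> W \<noteq> {} \<and> subgraph n s W F \<and> sg_connected W F \<and> bridgeless W F"

definition two_ec_component :: "nat \<Rightarrow> (nat \<Rightarrow> nat set) \<Rightarrow> nat set \<Rightarrow> nat set set \<Rightarrow> bool" where
  "two_ec_component n s W F \<longleftrightarrow> two_ec n s W F \<and>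
     (\<forall>W' F'. two_ec n s W' F' \<and> W \<subseteq> W' \<and> F \<subseteq> F' \<longrightarrow> W' = W \<and> F' = F)"

end

theory Submission
  imports Defs
begin


definition reach :: "nat \<Rightarrow> (nat \<Rightarrow> nat set) \<Rightarrow> nat \<Rightarrow> nat \<Rightarrow> bool" where
  "reach n s x y \<longleftrightarrow> (\<exists>k. (x, y) \<in> adj_rel n s ^^ k)"

definition dn :: "nat \<Rightarrow> (nat \<Rightarrow> nat set) \<Rightarrow> nat \<Rightarrow> nat \<Rightarrow> nat" where
  "dn n s x y = (LEAST k. (x, y) \<in> adj_rel n s ^^ k)"

definition conn :: "nat \<Rightarrow> (nat \<Rightarrow> nat set) \<Rightarrow> bool" where
  "conn n s \<longleftrightarrow> (\<forall>x\<in>players n. \<forall>y\<in>players n. reach n s x y)"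

definition SD :: "nat \<Rightarrow> (nat \<Rightarrow> nat set) \<Rightarrow> nat \<Rightarrow> nat" where
  "SD n s u = (\<Sum>x\<in>players n - {u}. dn n s u x)"

lemma adj_sym: "adj n s u v \<Longrightarrow> adj n s v u" by (auto simp: adj_def)
lemma adj_irrefl: "\<not> adj n s u u" by (auto simp: adj_def)
lemma adj_players: "adj n s u v \<Longrightarrow> u \<in> players n \<and> v \<in> players n" by (auto simp: adj_def)

lemma dn_le: "(x, y) \<in> adj_rel n s ^^ k \<Longrightarrow> dn n s x y \<le> k"
  unfolding dn_def by (rule Least_le)

lemma dn_path: "reach n s x y \<Longrightarrow> (x, y) \<in> adj_rel n s ^^ dn n s x y"
  unfolding reach_def dn_def by (auto intro: LeastI)

lemma reach_refl: "reach n s x x"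
  unfolding reach_def by (rule exI[of _ 0]) auto

lemma dn_refl[simp]: "dn n s x x = 0"
  using dn_le[where k=0 and x=x and y=x and n=n and s=s] by auto

lemma adj_reach: "adj n s x y \<Longrightarrow> reach n s x y \<and> dn n s x y \<le> 1"
proof -
  assume "adj n s x y"
  then have "(x, y) \<in> adj_rel n s ^^ 1" by (simp add: adj_rel_def)
  then show ?thesis unfolding reach_def using dn_le by blast
qed

lemma relpow_trans: "(x, y) \<in> R ^^ a \<Longrightarrow> (y, z) \<in> R ^^ b \<Longrightarrow> (x, z) \<in> R ^^ (a + b)"
  by (auto simp: relpow_add)

lemma reach_trans: "reach n s x y \<Longrightarrow> reach n s y z \<Longrightarrow> reach n s x z \<and> dn n s x z \<le> dn n s x y + dn n s y z"
  using relpow_trans[OF dn_path dn_path, of n s x y z] dn_le reach_def by blast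

lemma relpow_sym: "(x, y) \<in> adj_rel n s ^^ k \<Longrightarrow> (y, x) \<in> adj_rel n s ^^ k"
proof (induction k arbitrary: y)
  case 0 then show ?case by auto
next
  case (Suc k)
  then obtain p where p: "(x, p) \<in> adj_rel n s ^^ k" "(p, y) \<in> adj_rel n s" by (blast elim: relpow_Suc_E)
  then have "(y, p) \<in> adj_rel n s" by (auto simp: adj_rel_def adj_sym)
  with Suc.IH[OF p(1)] show ?case by (blast intro: relpow_Suc_I2)
qed

lemma reach_sym: "reach n s x y \<Longrightarrow> reach n s y x"
  unfolding reach_def using relpow_sym by blast

lemma dn_sym: "reach n s x y \<Longrightarrow> dn n s x y = dn n s y x"
  by (meson antisym dn_le dn_path reach_sym relpow_sym)

lemma dn_pred: "reach n s z x \<Longrightarrow> dn n s z x = Suc k \<Longrightarrow> \<exists>p. adj n s p x \<and> reach n s z p \<and> dn n s z p = k"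
proof -
  assume r: "reach n s z x" and d: "dn n s z x = Suc k"
  from dn_path[OF r] d obtain p where p: "(z, p) \<in> adj_rel n s ^^ k" "(p, x) \<in> adj_rel n s"
    by (auto elim: relpow_Suc_E)
  have a: "adj n s p x" using p(2) by (simp add: adj_rel_def)
  have rp: "reach n s z p" using p(1) reach_def by blast
  have "dn n s z p \<le> k" using dn_le[OF p(1)] .
  moreover have "dn n s z x \<le> dn n s z p + dn n s p x" using reach_trans[OF rp] adj_reach[OF a] by blast
  then have "Suc k \<le> dn n s z p + 1" using adj_reach[OF a] d by linarith
  ultimately show ?thesis using a rp by (intro exI[of _ p]) auto
qed

lemma conn_reach: "conn n s \<Longrightarrow> x \<in> players n \<Longrightarrow> y \<in> players n \<Longrightarrow> reach n s x y"
  by (simp add: conn_def)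

lemma conn_tri: "conn n s \<Longrightarrow> x \<in> players n \<Longrightarrow> y \<in> players n \<Longrightarrow> z \<in> players n \<Longrightarrow> dn n s x z \<le> dn n s x y + dn n s y z"
  using reach_trans conn_reach by blast

lemma Dsum_eq: "(\<forall>x\<in>players n - {u}. reach n s u x) \<Longrightarrow> Dsum n s u = ereal (real (SD n s u))"
  unfolding Dsum_def SD_def gdist_def reach_def dn_def
  by (simp add: of_nat_sum)

lemma card_players[simp]: "card (players n) = n" by (simp add: players_def)
lemma finite_players[simp]: "finite (players n)" by (simp add: players_def)

lemma adj_upd: "adj n s a b \<Longrightarrow> \<not>((a = w \<and> b = y) \<or> (a = y \<and> b = w)) \<Longrightarrow> adj n (s(w := (s w - {y}) \<union> {z})) a b"
  by (auto simp: adj_def)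

lemma adj_new: "w \<in> players n \<Longrightarrow> z \<in> players n \<Longrightarrow> w \<noteq> z \<Longrightarrow> adj n (s(w := T \<union> {z})) w z"
  by (auto simp: adj_def)

lemma swap_dist:
  assumes conn: "conn n s" and wP: "w \<in> players n" and zP: "z \<in> players n" and wz: "w \<noteq> z"
    and Hs: "dn n s z y = Suc (dn n s z w) \<Longrightarrow> \<exists>p'. adj n s p' y \<and> p' \<noteq> w \<and> Suc (dn n s z p') = dn n s z y"
  shows "\<forall>x. reach n s z x \<longrightarrow> dn n s z x = k \<longrightarrow> reach n (s(w := (s w - {y}) \<union> {z})) w x \<and> dn n (s(w := (s w - {y}) \<union> {z})) w x \<le> Suc k"
proof (induction k)
  case 0
  show ?case
  proof (intro allI impI)
    fix x assume "reach n s z x" "dn n s z x = 0"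
    then have "x = z" using dn_path[of n s z x] by (auto elim: relpow_0_E)
    then show "reach n (s(w := (s w - {y}) \<union> {z})) w x \<and> dn n (s(w := (s w - {y}) \<union> {z})) w x \<le> Suc 0"
      using adj_reach[OF adj_new[OF wP zP wz]] by auto
  qed
next
  case (Suc k)
  let ?s = "s(w := (s w - {y}) \<union> {z})"
  show ?case
  proof (intro allI impI)
    fix x assume rx: "reach n s z x" and dx: "dn n s z x = Suc k"
    obtain p where p: "adj n s p x" "reach n s z p" "dn n s z p = k" using dn_pred[OF rx dx] by blast
    have IHp: "reach n ?s w p \<and> dn n ?s w p \<le> Suc k" using Suc.IH p by blast
    show "reach n ?s w x \<and> dn n ?s w x \<le> Suc (Suc k)"
    proof (cases "(p = w \<and> x = y) \<or> (p = y \<and> x = w)")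
      case False
      then have a: "adj n ?s p x" using adj_upd[OF p(1)] by blast
      have r2: "reach n ?s p x \<and> dn n ?s p x \<le> 1" using adj_reach[OF a] .
      have r3: "reach n ?s w x \<and> dn n ?s w x \<le> dn n ?s w p + dn n ?s p x"
        using reach_trans[of n ?s w p x] IHp r2 by blast
      show ?thesis using r3 IHp r2 by linarith
    next
      case True
      then show ?thesis
      proof
        assume "p = y \<and> x = w" then show ?thesis using reach_refl by auto
      next
        assume pw: "p = w \<and> x = y"
        then have "dn n s z y = Suc (dn n s z w)" using p dx by simp
        then obtain p' where p': "adj n s p' y" "p' \<noteq> w" "Suc (dn n s z p') = dn n s z y" using Hs by blast
        have rp': "reach n s z p'" using conn zP adj_players[OF p'(1)] conn_reach by blast
        have "dn n s z p' = k" using p'(3) dx pw by simp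
        then have IH': "reach n ?s w p' \<and> dn n ?s w p' \<le> Suc k" using Suc.IH rp' by blast
        have "p' \<noteq> y" using p'(1) adj_irrefl by metis
        then have a: "adj n ?s p' y" using adj_upd[OF p'(1)] p'(2) by blast
        have r2: "reach n ?s p' y \<and> dn n ?s p' y \<le> 1" using adj_reach[OF a] .
        have r3: "reach n ?s w y \<and> dn n ?s w y \<le> dn n ?s w p' + dn n ?s p' y"
          using reach_trans[of n ?s w p' y] IH' r2 by blast
        show ?thesis using r3 IH' r2 pw by auto
      qed
    qed
  qed
qed

lemma sum_bound:
  assumes "\<forall>x\<in>players n - {w}. f x \<le> Suc (dn n s z x)" "z \<in> players n"
  shows "(\<Sum>x\<in>players n - {w}. f x) \<le> n + SD n s z"
proof -
  have "(\<Sum>x\<in>players n - {w}. f x) \<le> (\<Sum>x\<in>players n - {w}. Suc (dn n s z x))"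
    using assms(1) by (intro sum_mono) auto
  also have "\<dots> = card (players n - {w}) + (\<Sum>x\<in>players n - {w}. dn n s z x)"
    unfolding Suc_eq_plus1 sum.distrib by (simp add: add.commute)
  also have "\<dots> \<le> n + (\<Sum>x\<in>players n. dn n s z x)"
  proof (rule add_mono)
    show "card (players n - {w}) \<le> n" using card_Diff1_le[of "players n" w] by simp
    show "(\<Sum>x\<in>players n - {w}. dn n s z x) \<le> (\<Sum>x\<in>players n. dn n s z x)"
      by (rule sum_mono2) auto
  qed
  also have "(\<Sum>x\<in>players n. dn n s z x) = SD n s z"
    unfolding SD_def using assms(2) by (simp add: sum.remove)
  finally show ?thesis .
qed

lemma adj_bound:
  assumes "conn n s" "adj n s u q"
  shows "SD n s u \<le> n + SD n s q"
proof -
  have qP: "q \<in> players n" "u \<in> players n" using adj_players[OF assms(2)] by auto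
  have "\<forall>x\<in>players n - {u}. dn n s u x \<le> Suc (dn n s q x)"
  proof
    fix x assume "x \<in> players n - {u}"
    then have "dn n s u x \<le> dn n s u q + dn n s q x" using conn_tri[OF assms(1) qP(2) qP(1)] by auto
    then show "dn n s u x \<le> Suc (dn n s q x)" using adj_reach[OF assms(2)] by simp
  qed
  then show ?thesis using sum_bound[of n u "dn n s u"] qP unfolding SD_def by blast
qed

lemma ne_dev:
  assumes ne: "nash_eq \<alpha> n s" and al: "\<alpha> > 0" and wP: "w \<in> players n" and t: "t \<subseteq> players n - {w}"
    and ct: "card t \<le> card (s w)" and Da: "Dsum n s w = ereal a" and Db: "Dsum n (s(w := t)) w = ereal b"
  shows "a \<le> b"
proof -
  have "\<not> cost \<alpha> n (s(w := t)) w < cost \<alpha> n s w" using ne wP t unfolding nash_eq_def by blast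
  then have "\<alpha> * real (card (s w)) + a \<le> \<alpha> * real (card t) + b"
    unfolding cost_def using Da Db by simp
  moreover have "\<alpha> * real (card t) \<le> \<alpha> * real (card (s w))" using al ct by simp
  ultimately show ?thesis by linarith
qed


lemma swapD:
  assumes ne: "nash_eq \<alpha> n s" and al: "\<alpha> > 0" and conn: "conn n s"
    and wP: "w \<in> players n" and zP: "z \<in> players n" and yw: "y \<in> s w"
    and Hs: "dn n s z y = Suc (dn n s z w) \<Longrightarrow> \<exists>p'. adj n s p' y \<and> p' \<noteq> w \<and> Suc (dn n s z p') = dn n s z y"
  shows "SD n s w \<le> n + SD n s z"
proof (cases "w = z")
  case True then show ?thesis by simp
next
  case wz: False
  define t where "t = (s w - {y}) \<union> {z}"
  let ?s = "s(w := t)"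
  have all: "\<forall>x\<in>players n. reach n ?s w x \<and> dn n ?s w x \<le> Suc (dn n s z x)"
  proof
    fix x assume "x \<in> players n"
    then have rz: "reach n s z x" using conn zP conn_reach by blast
    have sd: "\<forall>x'. reach n s z x' \<longrightarrow> dn n s z x' = dn n s z x \<longrightarrow> reach n (s(w := (s w - {y}) \<union> {z})) w x' \<and> dn n (s(w := (s w - {y}) \<union> {z})) w x' \<le> Suc (dn n s z x)"
      by (rule swap_dist[OF conn wP zP wz]) (fact Hs)
    have "reach n (s(w := (s w - {y}) \<union> {z})) w x \<and> dn n (s(w := (s w - {y}) \<union> {z})) w x \<le> Suc (dn n s z x)"
      using sd rz by blast
    then show "reach n ?s w x \<and> dn n ?s w x \<le> Suc (dn n s z x)" unfolding t_def .
  qed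
  have "valid_profile n s" using ne by (simp add: nash_eq_def)
  then have vp: "s w \<subseteq> players n - {w}" using wP by (simp add: valid_profile_def)
  have tsub: "t \<subseteq> players n - {w}" using vp zP wz unfolding t_def by auto
  have fin: "finite (s w)" using finite_subset[OF vp] by simp
  have teq: "t = insert z (s w - {y})" unfolding t_def by auto
  have f2: "finite (s w - {y})" using fin by simp
  have "card t \<le> Suc (card (s w - {y}))" unfolding teq using card_insert_if[OF f2, of z] by simp
  moreover have "card (s w - {y}) = card (s w) - 1" using yw by (simp add: card_Diff_singleton)
  moreover have "card (s w) \<ge> 1" using yw fin card_gt_0_iff[of "s w"] by auto
  ultimately have ct: "card t \<le> card (s w)" by linarith
  have "\<forall>x\<in>players n - {w}. reach n s w x" using conn wP by (simp add: conn_def)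
  then have Da: "Dsum n s w = ereal (real (SD n s w))" by (rule Dsum_eq)
  have "\<forall>x\<in>players n - {w}. reach n ?s w x" using all by simp
  then have Db: "Dsum n ?s w = ereal (real (SD n ?s w))" by (rule Dsum_eq)
  have "real (SD n s w) \<le> real (SD n ?s w)" using ne_dev[OF ne al wP tsub ct Da Db] .
  then have "SD n s w \<le> SD n ?s w" by simp
  also have "SD n ?s w \<le> n + SD n s z"
  proof -
    have "\<forall>x\<in>players n - {w}. dn n ?s w x \<le> Suc (dn n s z x)" using all by blast
    from sum_bound[OF this zP] show ?thesis unfolding SD_def .
  qed
  finally show ?thesis .
qed

lemma ne_conn:
  assumes ne: "nash_eq \<alpha> n s"
  shows "conn n s"
proof (rule ccontr)
  assume "\<not> conn n s"
  then obtain x y where xy: "x \<in> players n" "y \<in> players n" "\<not> reach n s x y" unfolding conn_def by blast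
  then have "x \<noteq> y" using reach_refl by metis
  then have "gdist n s x y = \<infinity>" using xy(3) unfolding gdist_def reach_def by auto
  moreover have "y \<in> players n - {x}" using xy \<open>x \<noteq> y\<close> by simp
  ultimately have "Dsum n s x = \<infinity>" unfolding Dsum_def
    using sum_Pinfty[of "\<lambda>z. ereal_of_enat (gdist n s x z)" "players n - {x}"] by force
  then have c1: "cost \<alpha> n s x = \<infinity>" unfolding cost_def by simp
  define t where "t = players n - {x}"
  let ?s = "s(x := t)"
  have "\<forall>z\<in>players n - {x}. reach n ?s x z"
  proof
    fix z assume "z \<in> players n - {x}"
    then have "adj n ?s x z" unfolding adj_def t_def using xy by auto
    then show "reach n ?s x z" using adj_reach by blast
  qed
  then have "Dsum n ?s x = ereal (real (SD n ?s x))" using Dsum_eq by blast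
  then have "cost \<alpha> n ?s x < cost \<alpha> n s x" using c1 unfolding cost_def by simp
  moreover have "t \<subseteq> players n - {x}" unfolding t_def by simp
  ultimately show False using ne xy unfolding nash_eq_def by blast
qed

lemma edge_adj: "{a, b} \<in> edges n s \<Longrightarrow> adj n s a b"
  unfolding edges_def by (auto simp: doubleton_eq_iff adj_sym)

lemma F_adj: "two_ec n s W F \<Longrightarrow> {a, b} \<in> F \<Longrightarrow> adj n s a b \<and> a \<in> W \<and> b \<in> W"
  unfolding two_ec_def subgraph_def using edge_adj by blast

lemma deg2:
  assumes te: "two_ec n s W F" and tW: "t \<in> W" and cW: "card W \<ge> 2"
  shows "\<exists>r1 r2. r1 \<noteq> r2 \<and> {t, r1} \<in> F \<and> {t, r2} \<in> F"
proof -
  have "card (W - {t}) \<ge> 1" using cW tW by (simp add: card_Diff_singleton_if)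
  then have "W - {t} \<noteq> {}" by (metis card.empty not_one_le_zero)
  then obtain y where y: "y \<in> W" "y \<noteq> t" by blast
  have "(t, y) \<in> {(a, b). {a, b} \<in> F}\<^sup>*" using te tW y unfolding two_ec_def sg_connected_def by blast
  then obtain r where r: "{t, r} \<in> F" using y(2) by (auto elim: converse_rtranclE)
  have rt: "r \<noteq> t" using F_adj[OF te r] adj_irrefl by metis
  have rW: "r \<in> W" using F_adj[OF te r] by blast
  have "(t, r) \<in> {(a, b). {a, b} \<in> F - {{t, r}}}\<^sup>*"
    using te tW rW r unfolding two_ec_def bridgeless_def sg_connected_def by blast
  then obtain r2 where r2: "{t, r2} \<in> F - {{t, r}}" using rt by (auto elim: converse_rtranclE)
  then have "r2 \<noteq> r" by auto
  then show ?thesis using r r2 by blast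
qed



lemma level_adj: "conn n s \<Longrightarrow> v \<in> players n \<Longrightarrow> adj n s a b \<Longrightarrow> dn n s v b \<le> Suc (dn n s v a)"
  using conn_tri[of n s v a b] adj_players[of n s a b] adj_reach[of n s a b] by simp

lemma K1:
  assumes ne: "nash_eq \<alpha> n s" and al: "\<alpha> > 0" and conn: "conn n s"
    and wP: "w \<in> players n" and vP: "v \<in> players n" and yw: "y \<in> s w" and le: "dn n s v y \<le> dn n s v w"
  shows "SD n s w \<le> n + SD n s v"
  by (rule swapD[OF ne al conn wP vP yw]) (use le in simp)

lemma K2:
  assumes ne: "nash_eq \<alpha> n s" and al: "\<alpha> > 0" and conn: "conn n s"
    and wP: "w \<in> players n" and vP: "v \<in> players n" and yw: "y \<in> s w"
    and p: "adj n s p y" "p \<noteq> w" "Suc (dn n s v p) = dn n s v y"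
  shows "SD n s w \<le> n + SD n s v"
  by (rule swapD[OF ne al conn wP vP yw]) (use p in blast)

lemma adj_cases: "adj n s a b \<Longrightarrow> b \<in> s a \<or> a \<in> s b"
  by (simp add: adj_def)

lemma peak:
  assumes ne: "nash_eq \<alpha> n s" and al: "\<alpha> > 0" and conn: "conn n s"
    and te: "two_ec n s W F" and cW: "card W \<ge> 2" and vP: "v \<in> players n" and tW: "t \<in> W"
    and pk: "\<not> (\<exists>r. {t, r} \<in> F \<and> dn n s v r = Suc (dn n s v t))"
  shows "SD n s t \<le> 2 * n + SD n s v"
proof -
  obtain r1 r2 where r: "r1 \<noteq> r2" "{t, r1} \<in> F" "{t, r2} \<in> F" using deg2[OF te tW cW] by blast
  have a1: "adj n s t r1" and a2: "adj n s t r2" using F_adj[OF te] r by blast+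
  have tP: "t \<in> players n" using adj_players[OF a1] by blast
  have r1P: "r1 \<in> players n" and r2P: "r2 \<in> players n" using adj_players a1 a2 by blast+
  have l1: "dn n s v r1 \<le> dn n s v t" using level_adj[OF conn vP a1] pk r(2) by force
  have l2: "dn n s v r2 \<le> dn n s v t" using level_adj[OF conn vP a2] pk r(3) by force
  have l1': "dn n s v t \<le> Suc (dn n s v r1)" using level_adj[OF conn vP adj_sym[OF a1]] .
  have l2': "dn n s v t \<le> Suc (dn n s v r2)" using level_adj[OF conn vP adj_sym[OF a2]] .
  have same: "SD n s t \<le> 2 * n + SD n s v" if ar: "adj n s t r" and lr: "dn n s v r = dn n s v t" for r
  proof -
    have rP: "r \<in> players n" using adj_players[OF ar] by blast
    show ?thesis
    proof (cases "r \<in> s t")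
      case True
      have "SD n s t \<le> n + SD n s v" by (rule K1[OF ne al conn tP vP True]) (use lr in simp)
      then show ?thesis by simp
    next
      case False
      then have "t \<in> s r" using adj_cases[OF ar] by blast
      then have "SD n s r \<le> n + SD n s v" by (rule K1[OF ne al conn rP vP]) (use lr in simp)
      moreover have "SD n s t \<le> n + SD n s r" using adj_bound[OF conn ar] .
      ultimately show ?thesis by simp
    qed
  qed
  show ?thesis
  proof (cases "dn n s v r1 = dn n s v t")
    case True then show ?thesis using same a1 by blast
  next
    case F1: False
    show ?thesis
    proof (cases "dn n s v r2 = dn n s v t")
      case True then show ?thesis using same a2 by blast
    next
      case F2: False
      have e1: "Suc (dn n s v r1) = dn n s v t" using F1 l1 l1' by linarith
      have e2: "Suc (dn n s v r2) = dn n s v t" using F2 l2 l2' by linarith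
      show ?thesis
      proof (cases "r1 \<in> s t")
        case True
        have "SD n s t \<le> n + SD n s v" by (rule K1[OF ne al conn tP vP True]) (use e1 in simp)
        then show ?thesis by simp
      next
        case False
        then have ts: "t \<in> s r1" using adj_cases[OF a1] by blast
        have "SD n s r1 \<le> n + SD n s v"
          by (rule K2[OF ne al conn r1P vP ts adj_sym[OF a2]]) (use r(1) e2 in auto)
        moreover have "SD n s t \<le> n + SD n s r1" using adj_bound[OF conn a1] .
        ultimately show ?thesis by simp
      qed
    qed
  qed
qed


lemma climb:
  assumes ne: "nash_eq \<alpha> n s" and al: "\<alpha> > 0" and conn: "conn n s"
    and te: "two_ec n s W F" and cW: "card W \<ge> 2" and vP: "v \<in> players n" and qW: "q \<in> W"
  shows "\<exists>t\<in>W. SD n s t \<le> 2 * n + SD n s v \<and> dn n s t q + dn n s v q = dn n s v t"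
proof -
  define M where "M = Max (dn n s v ` players n)"
  have WP: "W \<subseteq> players n" using te unfolding two_ec_def subgraph_def by blast
  have Mge: "dn n s v x \<le> M" if "x \<in> players n" for x
    unfolding M_def using that by (intro Max_ge) auto
  show ?thesis using qW
  proof (induction "M - dn n s v q" arbitrary: q rule: less_induct)
    case less
    show ?case
    proof (cases "\<exists>r. {q, r} \<in> F \<and> dn n s v r = Suc (dn n s v q)")
      case False
      have "SD n s q \<le> 2 * n + SD n s v" by (rule peak[OF ne al conn te cW vP less.prems False])
      then show ?thesis using less.prems by auto
    next
      case True
      then obtain r where r: "{q, r} \<in> F" "dn n s v r = Suc (dn n s v q)" by blast
      have aqr: "adj n s q r" and rW: "r \<in> W" using F_adj[OF te r(1)] by blast+
      have "dn n s v r \<le> M" using Mge WP rW by blast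
      then have "M - dn n s v r < M - dn n s v q" using r(2) by linarith
      then obtain t where t: "t \<in> W" "SD n s t \<le> 2 * n + SD n s v" "dn n s t r + dn n s v r = dn n s v t"
        using less.hyps rW by blast
      have tP: "t \<in> players n" and qP: "q \<in> players n" and rP: "r \<in> players n"
        using WP t(1) less.prems rW by blast+
      have "dn n s t q \<le> dn n s t r + dn n s r q" using conn_tri[OF conn tP rP qP] .
      moreover have "dn n s r q \<le> 1" using adj_reach[OF adj_sym[OF aqr]] by blast
      moreover have "dn n s v t \<le> dn n s v q + dn n s q t" using conn_tri[OF conn vP qP tP] .
      moreover have "dn n s q t = dn n s t q" using dn_sym conn_reach[OF conn qP tP] by blast
      ultimately have "dn n s t q + dn n s v q = dn n s v t" using t(3) r(2) by linarith
      then show ?thesis using t by blast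
    qed
  qed
qed

lemma mainb:
  assumes ne: "nash_eq \<alpha> n s" and al: "\<alpha> > 0" and conn: "conn n s"
    and te: "two_ec n s W F" and cW: "card W \<ge> 2" and vP: "v \<in> players n" and uW: "u \<in> W"
  shows "SD n s u \<le> 3 * n + SD n s v"
proof (cases "\<exists>q. {u, q} \<in> F \<and> dn n s v q = Suc (dn n s v u)")
  case False
  have "SD n s u \<le> 2 * n + SD n s v" by (rule peak[OF ne al conn te cW vP uW False])
  then show ?thesis by simp
next
  case True
  then obtain q where q: "{u, q} \<in> F" "dn n s v q = Suc (dn n s v u)" by blast
  have auq: "adj n s u q" and qW: "q \<in> W" using F_adj[OF te q(1)] by blast+
  have uP: "u \<in> players n" and qP: "q \<in> players n" using adj_players[OF auq] by blast+
  show ?thesis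
  proof (cases "u \<in> s q")
    case True
    have "SD n s q \<le> n + SD n s v" by (rule K1[OF ne al conn qP vP True]) (use q(2) in simp)
    moreover have "SD n s u \<le> n + SD n s q" using adj_bound[OF conn auq] .
    ultimately show ?thesis by simp
  next
    case False
    then have qs: "q \<in> s u" using adj_cases[OF auq] by blast
    obtain t where t: "t \<in> W" "SD n s t \<le> 2 * n + SD n s v" "dn n s t q + dn n s v q = dn n s v t"
      using climb[OF ne al conn te cW vP qW] by blast
    have WP: "W \<subseteq> players n" using te unfolding two_ec_def subgraph_def by blast
    have tP: "t \<in> players n" using WP t(1) by blast
    have "SD n s u \<le> n + SD n s t"
    proof (rule swapD[OF ne al conn uP tP qs])
      assume H: "dn n s t q = Suc (dn n s t u)"
      obtain p where p: "adj n s p q" "reach n s t p" "dn n s t p = dn n s t u"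
        using dn_pred[OF conn_reach[OF conn tP qP] H] by blast
      have "p \<noteq> u"
      proof
        assume pu: "p = u"
        have "dn n s v t \<le> dn n s v u + dn n s u t" using conn_tri[OF conn vP uP tP] .
        moreover have "dn n s u t = dn n s t u" using dn_sym conn_reach[OF conn uP tP] by blast
        ultimately show False using t(3) H q(2) by linarith
      qed
      then show "\<exists>p'. adj n s p' q \<and> p' \<noteq> u \<and> Suc (dn n s t p') = dn n s t q"
        using p H by auto
    qed
    then show ?thesis using t(2) by simp
  qed
qed

theorem proposition1:
  fixes \<alpha> :: real and n :: nat and s :: "nat \<Rightarrow> nat set" and W :: "nat set" and F :: "nat set set"
  assumes "\<alpha> > 0"
    and "nash_eq \<alpha> n s"
    and "two_ec_component n s W F"
    and "card W \<ge> 3"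
    and "u \<in> W" and "v \<in> W"
  shows "\<bar>Dsum n s u - Dsum n s v\<bar> \<le> ereal (3 * real n)"
proof -
  have conn: "conn n s" using ne_conn[OF assms(2)] .
  have te: "two_ec n s W F" using assms(3) unfolding two_ec_component_def by blast
  have cW: "card W \<ge> 2" using assms(4) by simp
  have WP: "W \<subseteq> players n" using te unfolding two_ec_def subgraph_def by blast
  have uP: "u \<in> players n" and vP: "v \<in> players n" using WP assms(5,6) by blast+
  have b1: "SD n s u \<le> 3 * n + SD n s v" by (rule mainb[OF assms(2,1) conn te cW vP assms(5)])
  have b2: "SD n s v \<le> 3 * n + SD n s u" by (rule mainb[OF assms(2,1) conn te cW uP assms(6)])
  have "\<forall>x\<in>players n - {u}. reach n s u x" using conn uP by (simp add: conn_def)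
  then have Du: "Dsum n s u = ereal (real (SD n s u))" by (rule Dsum_eq)
  have "\<forall>x\<in>players n - {v}. reach n s v x" using conn vP by (simp add: conn_def)
  then have Dv: "Dsum n s v = ereal (real (SD n s v))" by (rule Dsum_eq)
  have "\<bar>real (SD n s u) - real (SD n s v)\<bar> \<le> 3 * real n" using b1 b2 by linarith
  then show ?thesis unfolding Du Dv by simp
qed

end
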